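(* Let $M$ be a matroid on $E$ whose dual is transversal with presentation $\mathcal A=(A_1,\ldots,A_r)$, $r=r^*(M)$; let $e\in E$, ordered so that for some $k\in[r]$, $e\in A_i$ iff $i\le k$. Let $G$ be a minimal $(e,\mathcal A)$-presenting graph on vertex set $[k]$ (identity presenting map), and suppose $G$ is a tree with edge set $\{\{i_1,j_1\},\ldots,\{i_{k-1},j_{k-1}\}\}$. Define $B_m=A_{i_m}\cup A_{j_m}-e$ for $1\le m\le k-1$ and $B_m=A_{m+1}$ for $k\le m\le r-1$. Choose $J\subseteq[r-1]$ and suppose $(M\backslash e)^*$ has presentation $\mathcal C=(C_1,\ldots,C_{r-1})$, where $C_m=B_m$ if $m\notin J$ and $C_m=\mathrm{cl}_{M\backslash e}(B_m)$ if $m\in J$. Let $j\in J$. Then $(C_1,\ldots,C_{j-1},B_j,C_{j+1},\ldots,C_{r-1})$ is also a presentation of $(M\backslash e)^*$.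
   Context: A presentation $\mathcal A$ of a transversal matroid $N$ means $N=M[\mathcal A]$, whose independent sets are the partial transversals of $\mathcal A$. For $X\subseteq E$: $\mathcal A(X)=\{i:A_i\subseteq X\}$ and $\mathcal A_e(X)=\{i\in\mathcal A(X): e\in A_i\}$; $G[U]$ is the induced subgraph on $U$. A graph with vertex set $\mathcal A_e(E)=[k]$ is $(e,\mathcal A)$-presenting if for all distinct $i,j$ the graph $G[\mathcal A_e(\mathrm{cl}_M(A_i\cup A_j))]$ is connected; minimal if deleting any one edge destroys this property. *)

theory Defs
  imports Main
begin

definition matroid :: "'a set \<Rightarrow> ('a set \<Rightarrow> bool) \<Rightarrow> bool" where
  "matroid E I \<longleftrightarrow> finite E \<and> I {} \<and> (\<forall>X. I X \<longrightarrow> X \<subseteq> E)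
     \<and> (\<forall>X Y. I Y \<and> X \<subseteq> Y \<longrightarrow> I X)
     \<and> (\<forall>X Y. I X \<and> I Y \<and> card X < card Y \<longrightarrow> (\<exists>y \<in> Y - X. I (insert y X)))"

definition basis :: "'a set \<Rightarrow> ('a set \<Rightarrow> bool) \<Rightarrow> 'a set \<Rightarrow> bool" where
  "basis E I B \<longleftrightarrow> I B \<and> (\<forall>X. I X \<and> B \<subseteq> X \<longrightarrow> X = B)"

definition dual_indep :: "'a set \<Rightarrow> ('a set \<Rightarrow> bool) \<Rightarrow> 'a set \<Rightarrow> bool" where
  "dual_indep E I X \<longleftrightarrow> X \<subseteq> E \<and> (\<exists>B. basis E I B \<and> X \<inter> B = {})"

definition rank :: "('a set \<Rightarrow> bool) \<Rightarrow> 'a set \<Rightarrow> nat" where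
  "rank I X = Max {card Y | Y. Y \<subseteq> X \<and> I Y}"

definition cl :: "'a set \<Rightarrow> ('a set \<Rightarrow> bool) \<Rightarrow> 'a set \<Rightarrow> 'a set" where
  "cl E I X = {x \<in> E. rank I (insert x X) = rank I X}"

text \<open>Deletion M \ e: ground set E - {e}, independent sets those of M avoiding e.\<close>
definition del_indep :: "('a set \<Rightarrow> bool) \<Rightarrow> 'a \<Rightarrow> 'a set \<Rightarrow> bool" where
  "del_indep I e X \<longleftrightarrow> I X \<and> e \<notin> X"

text \<open>A family (A_1,...,A_n) is encoded as a function A on indices 1..n.\<close>
definition partial_transversal :: "(nat \<Rightarrow> 'a set) \<Rightarrow> nat \<Rightarrow> 'a set \<Rightarrow> bool" where
  "partial_transversal A n X \<longleftrightarrow>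
     (\<exists>f. inj_on f X \<and> f ` X \<subseteq> {1..n} \<and> (\<forall>x\<in>X. x \<in> A (f x)))"

definition is_presentation :: "'a set \<Rightarrow> ('a set \<Rightarrow> bool) \<Rightarrow> (nat \<Rightarrow> 'a set) \<Rightarrow> nat \<Rightarrow> bool" where
  "is_presentation E I' A n \<longleftrightarrow> (\<forall>i\<in>{1..n}. A i \<subseteq> E)
     \<and> (\<forall>X. I' X \<longleftrightarrow> X \<subseteq> E \<and> partial_transversal A n X)"

definition fam_sub :: "(nat \<Rightarrow> 'a set) \<Rightarrow> nat \<Rightarrow> 'a set \<Rightarrow> nat set" where
  "fam_sub A n X = {i \<in> {1..n}. A i \<subseteq> X}"

definition fam_sub_e :: "(nat \<Rightarrow> 'a set) \<Rightarrow> nat \<Rightarrow> 'a \<Rightarrow> 'a set \<Rightarrow> nat set" where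
  "fam_sub_e A n e X = {i \<in> fam_sub A n X. e \<in> A i}"

definition walk_in :: "nat set set \<Rightarrow> nat set \<Rightarrow> nat list \<Rightarrow> bool" where
  "walk_in Ed U p \<longleftrightarrow> p \<noteq> [] \<and> set p \<subseteq> U \<and>
     (\<forall>t < length p - 1. {p ! t, p ! Suc t} \<in> Ed)"

text \<open>The induced subgraph G[U] (edges of Ed with both ends in U) is connected.\<close>
definition connected_on :: "nat set set \<Rightarrow> nat set \<Rightarrow> bool" where
  "connected_on Ed U \<longleftrightarrow> (\<forall>u\<in>U. \<forall>v\<in>U. \<exists>p. walk_in Ed U p \<and> hd p = u \<and> last p = v)"

definition simple_graph :: "nat set \<Rightarrow> nat set set \<Rightarrow> bool" where
  "simple_graph V Ed \<longleftrightarrow> (\<forall>ed\<in>Ed. ed \<subseteq> V \<and> card ed = 2)"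

definition has_cycle :: "nat set set \<Rightarrow> bool" where
  "has_cycle Ed \<longleftrightarrow> (\<exists>p. length p \<ge> 3 \<and> distinct p \<and>
      (\<forall>t < length p - 1. {p ! t, p ! Suc t} \<in> Ed) \<and> {last p, hd p} \<in> Ed)"

definition is_tree :: "nat set \<Rightarrow> nat set set \<Rightarrow> bool" where
  "is_tree V Ed \<longleftrightarrow> simple_graph V Ed \<and> connected_on Ed V \<and> \<not> has_cycle Ed"

definition presenting :: "'a set \<Rightarrow> ('a set \<Rightarrow> bool) \<Rightarrow> (nat \<Rightarrow> 'a set) \<Rightarrow> nat \<Rightarrow> 'a
     \<Rightarrow> nat set set \<Rightarrow> bool" where
  "presenting E I A n e Ed \<longleftrightarrow> simple_graph (fam_sub_e A n e E) Ed \<and>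
     (\<forall>i\<in>fam_sub_e A n e E. \<forall>j\<in>fam_sub_e A n e E. i \<noteq> j \<longrightarrow>
        connected_on Ed (fam_sub_e A n e (cl E I (A i \<union> A j))))"

definition minimal_presenting :: "'a set \<Rightarrow> ('a set \<Rightarrow> bool) \<Rightarrow> (nat \<Rightarrow> 'a set) \<Rightarrow> nat \<Rightarrow> 'a
     \<Rightarrow> nat set set \<Rightarrow> bool" where
  "minimal_presenting E I A n e Ed \<longleftrightarrow> presenting E I A n e Ed \<and>
     (\<forall>ed\<in>Ed. \<not> presenting E I A n e (Ed - {ed}))"

end

theory Submission
  imports Defs
begin


lemma cross:
  "p \<noteq> [] \<Longrightarrow> hd p \<in> S \<Longrightarrow> last p \<notin> S \<Longrightarrow> \<exists>t < length p - 1. p!t \<in> S \<and> p!Suc t \<notin> S"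
proof (induction p)
  case Nil then show ?case by simp
next
  case (Cons x xs)
  show ?case
  proof (cases "xs = []")
    case True with Cons show ?thesis by simp
  next
    case False
    show ?thesis
    proof (cases "hd xs \<in> S")
      case True
      with Cons.IH False Cons.prems obtain t where "t < length xs - 1" "xs!t \<in> S" "xs ! Suc t \<notin> S" by auto
      then show ?thesis by (intro exI[of _ "Suc t"]) auto
    next
      case f2: False
      then show ?thesis using Cons.prems False by (intro exI[of _ 0]) (auto simp: hd_conv_nth)
    qed
  qed
qed

lemma grow:
  assumes fin: "finite V" and conn: "connected_on Ed V" and v: "v \<in> V"
  shows "\<forall>S \<phi>. card (V - S) = n \<longrightarrow> v \<in> S \<longrightarrow> S \<subseteq> V \<longrightarrow> inj_on \<phi> (S - {v}) \<longrightarrow>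
     (\<forall>u\<in>S-{v}. \<phi> u \<in> Ed \<and> u \<in> \<phi> u \<and> \<phi> u \<subseteq> S) \<longrightarrow>
     (\<exists>\<phi>. inj_on \<phi> (V - {v}) \<and> (\<forall>u\<in>V-{v}. \<phi> u \<in> Ed \<and> u \<in> \<phi> u))"
proof (induction n)
  case 0
  show ?case
  proof (intro allI impI)
    fix S \<phi> assume c: "card (V - S) = 0" "v \<in> S" "S \<subseteq> V" and inj: "inj_on \<phi> (S - {v})"
      and h: "\<forall>u\<in>S-{v}. \<phi> u \<in> Ed \<and> u \<in> \<phi> u \<and> \<phi> u \<subseteq> S"
    then have "S = V" using fin by auto
    then show "\<exists>\<phi>. inj_on \<phi> (V - {v}) \<and> (\<forall>u\<in>V-{v}. \<phi> u \<in> Ed \<and> u \<in> \<phi> u)" using h inj by blast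
  qed
next
  case (Suc n)
  show ?case
  proof (intro allI impI)
    fix S \<phi> assume c: "card (V - S) = Suc n" and vS: "v \<in> S" and SV: "S \<subseteq> V" and inj: "inj_on \<phi> (S - {v})"
      and h: "\<forall>u\<in>S-{v}. \<phi> u \<in> Ed \<and> u \<in> \<phi> u \<and> \<phi> u \<subseteq> S"
    have "V - S \<noteq> {}" using c by (metis card.empty nat.simps(3))
    then obtain w where w: "w \<in> V" "w \<notin> S" by auto
    from conn v w obtain p where p: "walk_in Ed V p" "hd p = v" "last p = w" unfolding connected_on_def by blast
    then obtain t where t: "t < length p - 1" "p!t \<in> S" "p!Suc t \<notin> S"
      using cross[of p S] vS w unfolding walk_in_def by auto
    define a where "a = p!t"
    define b where "b = p!Suc t"
    have ab: "{a,b} \<in> Ed" using p(1) t(1) unfolding walk_in_def a_def b_def by auto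
    have bV: "b \<in> V"
    proof -
      have "Suc t < length p" using t(1) by linarith
      then show ?thesis using p(1) unfolding walk_in_def b_def by (meson nth_mem subsetD)
    qed
    have aS: "a \<in> S" "b \<notin> S" using t a_def b_def by auto
    let ?S = "insert b S"
    let ?\<phi> = "\<phi>(b := {a,b})"
    have "V - ?S = (V - S) - {b}" by auto
    then have c2: "card (V - ?S) = n" using c bV aS fin by (simp add: card_Diff_singleton)
    have inj2: "inj_on ?\<phi> (?S - {v})"
    proof (rule inj_onI)
      fix x y assume x: "x \<in> ?S - {v}" and y: "y \<in> ?S - {v}" and eq: "?\<phi> x = ?\<phi> y"
      show "x = y"
      proof (cases "x = b")
        case True
        show ?thesis
        proof (rule ccontr)
          assume "x \<noteq> y"
          then have "y \<in> S - {v}" "y \<noteq> b" using y True by auto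
          then have "\<phi> y = {a,b}" "\<phi> y \<subseteq> S" using eq True h by auto
          then show False using aS by auto
        qed
      next
        case False
        show ?thesis
        proof (cases "y = b")
          case True
          then have "x \<in> S - {v}" using x False by auto
          then have "\<phi> x = {a,b}" "\<phi> x \<subseteq> S" using eq True False h by auto
          then show ?thesis using aS by auto
        next
          case False2: False
          then show ?thesis using False x y eq inj by (auto dest: inj_onD)
        qed
      qed
    qed
    have h2: "\<forall>u\<in>?S-{v}. ?\<phi> u \<in> Ed \<and> u \<in> ?\<phi> u \<and> ?\<phi> u \<subseteq> ?S"
      using h ab aS by auto
    show "\<exists>\<phi>. inj_on \<phi> (V - {v}) \<and> (\<forall>u\<in>V-{v}. \<phi> u \<in> Ed \<and> u \<in> \<phi> u)"
      using Suc.IH c2 vS SV bV inj2 h2 by blast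
  qed
qed

lemma span_inj:
  assumes fin: "finite V" and conn: "connected_on Ed V" and v: "v \<in> V"
  shows "\<exists>\<phi>. inj_on \<phi> (V - {v}) \<and> (\<forall>u\<in>V-{v}. \<phi> u \<in> Ed \<and> u \<in> \<phi> u)"
proof -
  have "inj_on (\<lambda>_. {}::nat set) ({v} - {v})" by simp
  moreover have "card (V - {v}) = card (V - {v})" by simp
  ultimately show ?thesis using grow[OF assms, of "card (V - {v})"] v by blast
qed

lemma del_basis:
  assumes M: "matroid E I" and B0: "basis E I B0" "e \<notin> B0"
    and B': "basis (E - {e}) (del_indep I e) B'"
  shows "basis E I B'"
proof -
  have IB': "I B'" "e \<notin> B'" and mx: "\<forall>X. I X \<and> e \<notin> X \<and> B' \<subseteq> X \<longrightarrow> X = B'"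
    using B' unfolding basis_def del_indep_def by auto
  have IB0: "I B0" and mx0: "\<forall>X. I X \<and> B0 \<subseteq> X \<longrightarrow> X = B0" using B0 unfolding basis_def by auto
  have aug: "\<And>X Y. I X \<Longrightarrow> I Y \<Longrightarrow> card X < card Y \<Longrightarrow> \<exists>y\<in>Y - X. I (insert y X)"
    using M unfolding matroid_def by blast
  have sub: "\<And>X. I X \<Longrightarrow> X \<subseteq> E" and fE: "finite E" using M unfolding matroid_def by auto
  have c1: "card B0 \<le> card B'"
  proof (rule ccontr)
    assume "\<not> ?thesis"
    then obtain y where y: "y \<in> B0 - B'" "I (insert y B')" using aug[OF IB'(1) IB0] by auto
    then have "insert y B' = B'" using mx B0(2) IB'(2) by auto
    then show False using y by auto
  qed
  show ?thesis unfolding basis_def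
  proof (intro conjI allI impI)
    show "I B'" by fact
    fix X assume X: "I X \<and> B' \<subseteq> X"
    have "card X \<le> card B0"
    proof (rule ccontr)
      assume "\<not> ?thesis"
      then obtain y where y: "y \<in> X - B0" "I (insert y B0)" using aug[OF IB0, of X] X by auto
      then have "insert y B0 = B0" using mx0 by auto
      then show False using y by auto
    qed
    moreover have "finite X" using sub X fE finite_subset by blast
    ultimately show "X = B'" using X c1 by (metis card_seteq order_trans)
  qed
qed




theorem lemma3p7:
  fixes E :: "'a set" and I :: "'a set \<Rightarrow> bool" and A B C :: "nat \<Rightarrow> 'a set"
    and r k j :: nat and e :: 'a and Ed :: "nat set set" and ei ej :: "nat \<Rightarrow> nat"
    and J :: "nat set"
  assumes M: "matroid E I"
    and r: "r = rank (dual_indep E I) E"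
    and pres: "is_presentation E (dual_indep E I) A r"
    and eE: "e \<in> E"
    and k: "1 \<le> k" "k \<le> r"
    and order: "\<forall>i\<in>{1..r}. e \<in> A i \<longleftrightarrow> i \<le> k"
    and G: "minimal_presenting E I A r e Ed"
    and tree: "is_tree {1..k} Ed"
    and edges: "Ed = {{ei m, ej m} | m. m \<in> {1..k-1}}"
    and B1: "\<forall>m\<in>{1..k-1}. B m = A (ei m) \<union> A (ej m) - {e}"
    and B2: "\<forall>m\<in>{k..r-1}. B m = A (m + 1)"
    and J: "J \<subseteq> {1..r-1}"
    and C: "\<forall>m\<in>{1..r-1}. C m = (if m \<in> J then cl (E - {e}) (del_indep I e) (B m) else B m)"
    and presC: "is_presentation (E - {e}) (dual_indep (E - {e}) (del_indep I e)) C (r - 1)"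
    and jJ: "j \<in> J"
  shows "is_presentation (E - {e}) (dual_indep (E - {e}) (del_indep I e)) (C(j := B j)) (r - 1)"
  proof -
  let ?E' = "E - {e}" and ?I' = "del_indep I e"
  let ?D = "C(j := B j)"
  have finE: "finite E" using M unfolding matroid_def by auto
  have Asub: "\<forall>i\<in>{1..r}. A i \<subseteq> E" using pres unfolding is_presentation_def by auto
  have sg: "simple_graph {1..k} Ed" and conn: "connected_on Ed {1..k}" using tree unfolding is_tree_def by auto
  have edge_in: "\<And>m. m \<in> {1..k-1} \<Longrightarrow> {ei m, ej m} \<in> Ed" using edges by blast
  have edge_sub: "\<And>m. m \<in> {1..k-1} \<Longrightarrow> ei m \<in> {1..k} \<and> ej m \<in> {1..k}"
    using edge_in sg unfolding simple_graph_def by blast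
  have Bsub: "\<forall>m\<in>{1..r-1}. B m \<subseteq> E - {e}"
  proof
    fix m assume m: "m \<in> {1..r-1}"
    show "B m \<subseteq> E - {e}"
    proof (cases "m \<le> k - 1")
      case True
      then have mm: "m \<in> {1..k-1}" using m by auto
      then have "ei m \<in> {1..k}" "ej m \<in> {1..k}" using edge_sub by auto
      then have "ei m \<in> {1..r}" "ej m \<in> {1..r}" using k by auto
      then show ?thesis using B1 mm Asub by auto
    next
      case False
      then have mm: "m \<in> {k..r-1}" using m by auto
      then have "m + 1 \<in> {1..r}" "\<not> m + 1 \<le> k" using k by auto
      then show ?thesis using B2 mm Asub order by auto
    qed
  qed
  have BC: "\<forall>m\<in>{1..r-1}. B m \<subseteq> C m"
  proof
    fix m assume m: "m \<in> {1..r-1}"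
    have "B m \<subseteq> cl ?E' ?I' (B m)" using Bsub m unfolding cl_def by (auto simp: insert_absorb)
    then show "B m \<subseteq> C m" using C m by auto
  qed
  have jr: "j \<in> {1..r-1}" using J jJ by auto
  have DC: "\<forall>m\<in>{1..r-1}. ?D m \<subseteq> C m" using BC jr by auto
  have BD: "\<forall>m\<in>{1..r-1}. B m \<subseteq> ?D m" using BC by auto
  have Csub: "\<forall>m\<in>{1..r-1}. C m \<subseteq> ?E'" using presC unfolding is_presentation_def by auto
  have presC2: "\<And>X. dual_indep ?E' ?I' X \<longleftrightarrow> X \<subseteq> ?E' \<and> partial_transversal C (r - 1) X"
    using presC unfolding is_presentation_def by auto
  have presA: "\<And>X. dual_indep E I X \<longleftrightarrow> X \<subseteq> E \<and> partial_transversal A r X"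
    using pres unfolding is_presentation_def by auto
  show ?thesis unfolding is_presentation_def
  proof (intro conjI allI)
    show "\<forall>i\<in>{1..r - 1}. ?D i \<subseteq> ?E'" using DC Csub by blast
    fix X
    show "dual_indep ?E' ?I' X \<longleftrightarrow> X \<subseteq> ?E' \<and> partial_transversal ?D (r - 1) X"
    proof
      assume "X \<subseteq> ?E' \<and> partial_transversal ?D (r - 1) X"
      then obtain f where "X \<subseteq> ?E'" "inj_on f X" "f ` X \<subseteq> {1..r-1}" "\<forall>x\<in>X. x \<in> ?D (f x)"
        unfolding partial_transversal_def by blast
      moreover then have "\<forall>x\<in>X. x \<in> C (f x)" using DC by blast
      ultimately show "dual_indep ?E' ?I' X" using presC2 unfolding partial_transversal_def by blast
    next
      assume NX: "dual_indep ?E' ?I' X"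
      then have XE: "X \<subseteq> ?E'" unfolding dual_indep_def by auto
      obtain B' where B': "basis ?E' ?I' B'" "X \<inter> B' = {}" using NX unfolding dual_indep_def by auto
      have "partial_transversal A r {e}" unfolding partial_transversal_def
        using k order by (intro exI[of _ "\<lambda>_. 1"]) auto
      then have "dual_indep E I {e}" using presA eE by auto
      then obtain B0 where B0: "basis E I B0" "e \<notin> B0" unfolding dual_indep_def by auto
      have bB': "basis E I B'" using del_basis[OF M B0 B'(1)] .
      have "e \<notin> B'" using B'(1) unfolding basis_def del_indep_def by auto
      then have "dual_indep E I (insert e X)" unfolding dual_indep_def using bB' B'(2) XE eE by auto
      then obtain g where g: "inj_on g (insert e X)" "g ` (insert e X) \<subseteq> {1..r}" "\<forall>x\<in>insert e X. x \<in> A (g x)"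
        using presA unfolding partial_transversal_def by blast
      define v where "v = g e"
      have v: "v \<in> {1..k}" using g order unfolding v_def by auto
      obtain \<phi> where \<phi>: "inj_on \<phi> ({1..k} - {v})" "\<forall>u\<in>{1..k}-{v}. \<phi> u \<in> Ed \<and> u \<in> \<phi> u"
        using span_inj[OF _ conn v] by auto
      define idx where "idx ed = (SOME m. m \<in> {1..k-1} \<and> ed = {ei m, ej m})" for ed
      have idx: "\<And>ed. ed \<in> Ed \<Longrightarrow> idx ed \<in> {1..k-1} \<and> ed = {ei (idx ed), ej (idx ed)}"
      proof -
        fix ed assume "ed \<in> Ed"
        then have "\<exists>m. m \<in> {1..k-1} \<and> ed = {ei m, ej m}" using edges by blast
        then show "idx ed \<in> {1..k-1} \<and> ed = {ei (idx ed), ej (idx ed)}"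
          unfolding idx_def by (rule someI_ex)
      qed
      define \<psi> where "\<psi> u = idx (\<phi> u)" for u
      have \<psi>: "\<And>u. u \<in> {1..k}-{v} \<Longrightarrow> \<psi> u \<in> {1..k-1} \<and> u \<in> {ei (\<psi> u), ej (\<psi> u)}"
        using idx \<phi>(2) unfolding \<psi>_def by metis
      have \<psi>inj: "inj_on \<psi> ({1..k} - {v})"
      proof (rule inj_onI)
        fix x y assume x: "x \<in> {1..k} - {v}" and y: "y \<in> {1..k} - {v}" and "\<psi> x = \<psi> y"
        then have "\<phi> x = \<phi> y" using idx \<phi>(2) unfolding \<psi>_def by metis
        then show "x = y" using \<phi>(1) x y by (auto dest: inj_onD)
      qed
      define h where "h x = (if g x \<le> k then \<psi> (g x) else g x - 1)" for x
      have gx: "\<And>x. x \<in> X \<Longrightarrow> g x \<in> {1..r} \<and> x \<in> A (g x) \<and> g x \<noteq> v \<and> x \<noteq> e"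
      proof -
        fix x assume x: "x \<in> X"
        then have "x \<noteq> e" using XE by auto
        have xi: "x \<in> insert e X" using x by simp
        have ei: "e \<in> insert e X" by simp
        have "g x \<noteq> g e"
        proof
          assume "g x = g e"
          then have "x = e" using inj_onD[OF g(1) _ xi ei] by simp
          then show False using \<open>x \<noteq> e\<close> by simp
        qed
        moreover have "g x \<in> {1..r}" using g(2) xi by (rule subsetD[OF _ imageI])
        moreover have "x \<in> A (g x)" using g(3) xi by (rule bspec)
        ultimately show "g x \<in> {1..r} \<and> x \<in> A (g x) \<and> g x \<noteq> v \<and> x \<noteq> e"
          using \<open>x \<noteq> e\<close> unfolding v_def by simp
      qed
      have hmem: "\<And>x. x \<in> X \<Longrightarrow> h x \<in> {1..r-1} \<and> x \<in> B (h x)"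
      proof -
        fix x assume x: "x \<in> X"
        have g1: "g x \<in> {1..r}" and g2: "x \<in> A (g x)" and g3: "g x \<noteq> v" and g4: "x \<noteq> e"
          using gx[OF x] by simp_all
        show "h x \<in> {1..r-1} \<and> x \<in> B (h x)"
        proof (cases "g x \<le> k")
          case True
          then have u: "g x \<in> {1..k} - {v}" using g1 g3 by simp
          have p1: "\<psi> (g x) \<in> {1..k-1}" and p2: "g x \<in> {ei (\<psi> (g x)), ej (\<psi> (g x))}"
            using \<psi>[OF u] by simp_all
          have "B (\<psi> (g x)) = A (ei (\<psi> (g x))) \<union> A (ej (\<psi> (g x))) - {e}" using B1 p1 by blast
          moreover have "x \<in> A (ei (\<psi> (g x))) \<union> A (ej (\<psi> (g x)))" using p2 g2 by (metis UnI1 UnI2 empty_iff insert_iff)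
          ultimately have "x \<in> B (\<psi> (g x))" using g4 by simp
          moreover have "h x = \<psi> (g x)" unfolding h_def using True by simp
          moreover have "\<psi> (g x) \<in> {1..r-1}" using p1 k by auto
          ultimately show ?thesis by simp
        next
          case False
          then have m: "g x - 1 \<in> {k..r-1}" using g1 by auto
          have "g x - 1 + 1 = g x" using g1 by simp
          then have "B (g x - 1) = A (g x)" using B2 m by metis
          moreover have "h x = g x - 1" unfolding h_def using False by simp
          moreover have "g x - 1 \<in> {1..r-1}" using m k by auto
          ultimately show ?thesis using g2 by simp
        qed
      qed
      have hinj: "inj_on h X"
      proof (rule inj_onI)
        fix x y assume x: "x \<in> X" and y: "y \<in> X" and eq: "h x = h y"
        have x1: "g x \<in> {1..r}" and x3: "g x \<noteq> v" using gx[OF x] by simp_all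
        have y1: "g y \<in> {1..r}" and y3: "g y \<noteq> v" using gx[OF y] by simp_all
        have "g x = g y"
        proof (cases "g x \<le> k")
          case tx: True
          then have ux: "g x \<in> {1..k} - {v}" using x1 x3 by simp
          have px: "\<psi> (g x) \<le> k - 1" using \<psi>[OF ux] by simp
          have hx: "h x = \<psi> (g x)" unfolding h_def using tx by simp
          show ?thesis
          proof (cases "g y \<le> k")
            case True
            then have uy: "g y \<in> {1..k} - {v}" using y1 y3 by simp
            have "h y = \<psi> (g y)" unfolding h_def using True by simp
            then have "\<psi> (g x) = \<psi> (g y)" using eq hx by simp
            then show ?thesis using inj_onD[OF \<psi>inj _ ux uy] by simp
          next
            case False
            have "h y = g y - 1" unfolding h_def using False by simp
            then have "\<psi> (g x) = g y - 1" using eq hx by simp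
            then show ?thesis using px False k(1) by arith
          qed
        next
          case fx: False
          have hx: "h x = g x - 1" unfolding h_def using fx by simp
          show ?thesis
          proof (cases "g y \<le> k")
            case True
            then have uy: "g y \<in> {1..k} - {v}" using y1 y3 by simp
            have py: "\<psi> (g y) \<le> k - 1" using \<psi>[OF uy] by simp
            have "h y = \<psi> (g y)" unfolding h_def using True by simp
            then have "g x - 1 = \<psi> (g y)" using eq hx by simp
            then show ?thesis using py fx k(1) by arith
          next
            case False
            have "h y = g y - 1" unfolding h_def using False by simp
            then have "g x - 1 = g y - 1" using eq hx by simp
            then show ?thesis using fx False k(1) by arith
          qed
        qed
        have xi: "x \<in> insert e X" and yi: "y \<in> insert e X" using x y by simp_all
        show "x = y" using inj_onD[OF g(1) \<open>g x = g y\<close> xi yi] .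
      qed
      have "partial_transversal ?D (r - 1) X" unfolding partial_transversal_def
      proof (intro exI[of _ h] conjI)
        show "inj_on h X" by (rule hinj)
        show "h ` X \<subseteq> {1..r-1}" using hmem by auto
        show "\<forall>x\<in>X. x \<in> ?D (h x)" using hmem BD by blast
      qed
      then show "X \<subseteq> ?E' \<and> partial_transversal ?D (r - 1) X" using XE by auto
    qed
  qed
qed

end
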